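(* Let ${\cal H}$ be a $1$-Sperner hypergraph and let $C$ be a hyperedge of ${\cal H}$ of maximum possible size. Then for every two distinct vertices $x,y\notin C$ and every two hyperedges $A$ containing $x$ and $B$ containing $y$, $|A|\le|B|$ implies $A\cap C\subseteq B\cap C$.
   Context: A hypergraph ${\cal H}=(V,{\cal E})$ consists of a finite vertex set $V$ and a set ${\cal E}$ of subsets of $V$. It is $1$-Sperner if every two distinct hyperedges $e,f$ satisfy $\min\{|e\setminus f|,|f\setminus e|\}=1$. *)

theory Defs
  imports Main
begin

definition hypergraph :: "'a set \<Rightarrow> 'a set set \<Rightarrow> bool" where
  "hypergraph V E \<longleftrightarrow> finite V \<and> (\<forall>e\<in>E. e \<subseteq> V)"

definition one_sperner :: "'a set set \<Rightarrow> bool" where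
  "one_sperner E \<longleftrightarrow>
     (\<forall>e\<in>E. \<forall>f\<in>E. e \<noteq> f \<longrightarrow> min (card (e - f)) (card (f - e)) = 1)"

end

theory Submission
  imports Defs
begin

lemma diff_single:
  assumes fin: "finite A" "finite C" and E: "one_sperner E" and "A \<in> E" "C \<in> E"
    and "card A \<le> card C" and "x \<in> A" "x \<notin> C"
  shows "A - C = {x}"
proof -
  have ne: "A \<noteq> C" using assms by auto
  have m: "min (card (A - C)) (card (C - A)) = 1" using E assms ne unfolding one_sperner_def by blast
  have a: "card (A - C) = card A - card (A \<inter> C)" using fin by (simp add: card_Diff_subset_Int)
  have c: "card (C - A) = card C - card (A \<inter> C)" using fin
    by (metis Int_commute card_Diff_subset_Int finite_Int)
  have "card (A \<inter> C) \<le> card A" using fin by (simp add: card_mono)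
  hence "card (A - C) \<le> card (C - A)" using a c assms by linarith
  hence "card (A - C) = 1" using m by linarith
  then obtain z where "A - C = {z}" by (meson card_1_singletonE)
  thus ?thesis using assms by auto
qed

theorem lemma5:
  fixes V :: "'a set" and E :: "'a set set"
  assumes "hypergraph V E"
    and "one_sperner E"
    and "C \<in> E"
    and "\<forall>e\<in>E. card e \<le> card C"
    and "x \<in> V" and "y \<in> V" and "x \<noteq> y" and "x \<notin> C" and "y \<notin> C"
    and "A \<in> E" and "x \<in> A" and "B \<in> E" and "y \<in> B"
    and "card A \<le> card B"
  shows "A \<inter> C \<subseteq> B \<inter> C"
proof -
  have fin: "finite A" "finite B" "finite C" using assms(1,3,10,12) unfolding hypergraph_def
    by (meson finite_subset)+
  have dA: "A - C = {x}" using diff_single[OF fin(1,3) assms(2,10,3)] assms by auto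
  have dB: "B - C = {y}" using diff_single[OF fin(2,3) assms(2,12,3)] assms by auto
  have AB: "A \<noteq> B" using dA dB assms(7) by auto
  have m: "min (card (A - B)) (card (B - A)) = 1" using assms(2,10,12) AB unfolding one_sperner_def by blast
  have eA: "A = insert x (A \<inter> C)" using dA by blast
  have eB: "B = insert y (B \<inter> C)" using dB by blast
  have AmB: "A - B = insert x ((A \<inter> C) - (B \<inter> C))"
  proof -
    have "x \<notin> B" using dB assms(7,8) by (metis DiffI singletonD)
    then show ?thesis using eA eB assms(11) by blast
  qed
  have BmA: "B - A = insert y ((B \<inter> C) - (A \<inter> C))"
  proof -
    have "y \<notin> A" using dA assms(7,9) by (metis DiffI singletonD)
    then show ?thesis using eA eB assms(13) by blast
  qed
  have xn: "x \<notin> (A \<inter> C) - (B \<inter> C)" "y \<notin> (B \<inter> C) - (A \<inter> C)" using assms(8,9) by auto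
  show ?thesis
  proof (cases "card (A - B) = 1")
    case True
    hence "card ((A \<inter> C) - (B \<inter> C)) = 0" using AmB xn fin by simp
    thus ?thesis using fin by simp
  next
    case False
    hence "card (B - A) = 1" using m by linarith
    hence "card ((B \<inter> C) - (A \<inter> C)) = 0" using BmA xn fin by simp
    hence sub: "B \<inter> C \<subseteq> A \<inter> C" using fin by simp
    have "card A = Suc (card (A \<inter> C))" using fin(1) assms(8)
      by (subst eA) simp
    moreover have "card B = Suc (card (B \<inter> C))" using fin(2) assms(9)
      by (subst eB) simp
    ultimately have "card (A \<inter> C) \<le> card (B \<inter> C)" using assms(14) by simp
    hence "B \<inter> C = A \<inter> C" using card_seteq[OF _ sub] fin by simp
    thus ?thesis by simp
  qed
qed

end
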